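(* For each integer $n\ge1$, let $g_n(x)=(1+x^2)^{-n}$ and $\widehat{g_n}(\omega)=\int_{\mathbb R}g_n(x)e^{i\omega x}dx$. Then $$K_n:=\int_0^\infty\omega^3|\widehat{g_n}(\omega)|^2\,d\omega=\frac{2\pi^2n^2}{16^n}\binom{2n-1}{n}\binom{2n+1}{n}.$$ *)

theory Defs
  imports "HOL-Analysis.Analysis"
begin

definition g :: "nat \<Rightarrow> real \<Rightarrow> real" where
  "g n x = 1 / (1 + x\<^sup>2) ^ n"

definition ghat :: "nat \<Rightarrow> real \<Rightarrow> complex" where
  "ghat n \<omega> = integral UNIV (\<lambda>x. complex_of_real (g n x) * exp (\<i> * complex_of_real (\<omega> * x)))"

end

theory Submission imports Defs "HOL-Probability.Characteristic_Functions" "HOL-Probability.Sinc_Integral" "HOL-Real_Asymp.Real_Asymp"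
begin

lemma nn_gamma_scaled:
  fixes a c :: real
  assumes a: "a > 0" and c: "c > 0"
  shows "(\<integral>\<^sup>+u. ennreal (indicator {0<..} u * u powr (a-1) * exp(-(c*u))) \<partial>lborel) = ennreal (Gamma a / c powr a)"
proof -
  have "ennreal (Gamma a) = (\<integral>\<^sup>+t. ennreal (indicator {0..} t * t powr (a - 1) / exp t) \<partial>lborel)"
    using Gamma_conv_nn_integral_real[OF a] .
  also have "\<dots> = ennreal c * (\<integral>\<^sup>+u. ennreal (indicator {0..} (0 + c*u) * (0 + c*u) powr (a - 1) / exp (0 + c*u)) \<partial>lborel)"
    using c by (subst nn_integral_real_affine[where c=c and t=0]) auto
  also have "\<dots> = ennreal c * (\<integral>\<^sup>+u. ennreal (c powr (a-1)) * ennreal (indicator {0<..} u * u powr (a-1) * exp(-(c*u))) \<partial>lborel)"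
  proof (intro arg_cong2[where f="(*)"] refl nn_integral_cong)
    fix u :: real
    show "ennreal (indicator {0..} (0 + c*u) * (0 + c*u) powr (a - 1) / exp (0 + c*u)) =
          ennreal (c powr (a-1)) * ennreal (indicator {0<..} u * u powr (a-1) * exp(-(c*u)))"
      using c by (cases "u > 0") (auto simp: indicator_def powr_mult ennreal_mult[symmetric] exp_minus field_simps zero_le_mult_iff)
  qed
  also have "\<dots> = ennreal (c * c powr (a-1)) * (\<integral>\<^sup>+u. ennreal (indicator {0<..} u * u powr (a-1) * exp(-(c*u))) \<partial>lborel)"
    using c by (subst nn_integral_cmult) (auto simp: ennreal_mult mult.assoc)
  also have "c * c powr (a-1) = c powr a"
    using c by (simp add: powr_diff field_simps)
  finally have *: "ennreal (Gamma a) = ennreal (c powr a) * (\<integral>\<^sup>+u. ennreal (indicator {0<..} u * u powr (a-1) * exp(-(c*u))) \<partial>lborel)" .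
  have cp: "c powr a > 0" using c by simp
  have "ennreal (Gamma a / c powr a) = ennreal (1 / c powr a) * ennreal (Gamma a)"
    using cp a by (subst ennreal_mult[symmetric]) (auto intro: Gamma_real_pos less_imp_le)
  also have "\<dots> = (ennreal (1 / c powr a) * ennreal (c powr a)) * (\<integral>\<^sup>+u. ennreal (indicator {0<..} u * u powr (a-1) * exp(-(c*u))) \<partial>lborel)"
    by (subst *) (simp only: mult.assoc)
  also have "ennreal (1 / c powr a) * ennreal (c powr a) = 1"
    using cp by (subst ennreal_mult[symmetric]) auto
  finally show ?thesis by simp
qed

lemma std_normal_ft:
  "(\<integral>y. std_normal_density y *\<^sub>R exp (\<i> * complex_of_real (t*y)) \<partial>lborel) = complex_of_real (exp (- (t^2) / 2))"
proof -
  have "char std_normal_distribution t = complex_of_real (exp (- (t^2) / 2))"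
    by (simp add: char_std_normal_distribution)
  moreover have "char std_normal_distribution t = (\<integral>y. std_normal_density y *\<^sub>R exp (\<i> * complex_of_real (t*y)) \<partial>lborel)"
    unfolding char_def by (subst integral_density) (auto simp: normal_density_nonneg)
  ultimately show ?thesis by simp
qed

lemma gauss_ft:
  fixes u \<omega> :: real
  assumes u: "u > 0"
  shows "(\<integral>x. complex_of_real (exp (-(u*x\<^sup>2))) * exp (\<i> * complex_of_real (\<omega>*x)) \<partial>lborel)
         = complex_of_real (sqrt (pi/u) * exp (-(\<omega>\<^sup>2/(4*u))))"
proof -
  define s where "s = 1 / sqrt (2*u)"
  have s: "s > 0" using u by (simp add: s_def)
  have s2: "s\<^sup>2 = 1/(2*u)" using u by (simp add: s_def power_divide)
  have "(\<integral>x. complex_of_real (exp (-(u*x\<^sup>2))) * exp (\<i> * complex_of_real (\<omega>*x)) \<partial>lborel)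
      = \<bar>s\<bar> *\<^sub>R (\<integral>y. complex_of_real (exp (-(u*(0 + s*y)\<^sup>2))) * exp (\<i> * complex_of_real (\<omega>*(0 + s*y))) \<partial>lborel)"
    using s by (intro lborel_integral_real_affine) simp
  also have "(\<lambda>y. complex_of_real (exp (-(u*(0 + s*y)\<^sup>2))) * exp (\<i> * complex_of_real (\<omega>*(0 + s*y))))
      = (\<lambda>y. sqrt (2*pi) *\<^sub>R (std_normal_density y *\<^sub>R exp (\<i> * complex_of_real ((\<omega> * s) * y))))"
  proof
    fix y
    have "u*(s*y)\<^sup>2 = y\<^sup>2/2" using s2 u by (simp add: power_mult_distrib field_simps)
    then show "complex_of_real (exp (-(u*(0 + s*y)\<^sup>2))) * exp (\<i> * complex_of_real (\<omega>*(0 + s*y)))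
      = sqrt (2*pi) *\<^sub>R (std_normal_density y *\<^sub>R exp (\<i> * complex_of_real ((\<omega> * s) * y)))"
      by (simp add: std_normal_density_def scaleR_conv_of_real mult_ac)
  qed
  also have "(\<integral>y. sqrt (2*pi) *\<^sub>R (std_normal_density y *\<^sub>R exp (\<i> * complex_of_real ((\<omega> * s) * y))) \<partial>lborel)
      = sqrt (2*pi) *\<^sub>R complex_of_real (exp (- ((\<omega> * s)^2) / 2))"
    by (simp only: integral_scaleR_right std_normal_ft)
  also have "\<bar>s\<bar> *\<^sub>R (sqrt (2*pi) *\<^sub>R complex_of_real (exp (- ((\<omega> * s)^2) / 2)))
      = complex_of_real ((s * sqrt (2*pi)) * exp (- ((\<omega> * s)^2) / 2))"
    using s by (simp add: scaleR_conv_of_real)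
  also have "s * sqrt (2*pi) = sqrt (pi/u)"
    using u by (simp add: s_def real_sqrt_divide real_sqrt_mult)
  also have "- ((\<omega> * s)^2) / 2 = -(\<omega>\<^sup>2/(4*u))"
    using s2 u by (simp add: power_mult_distrib field_simps)
  finally show ?thesis .
qed


lemma bochner_gamma_scaled:
  fixes a c :: real
  assumes a: "a > 0" and c: "c > 0"
  shows "has_bochner_integral lborel (\<lambda>u. indicator {0<..} u * u powr (a-1) * exp(-(c*u))) (Gamma a / c powr a)"
  using a c by (intro has_bochner_integral_nn_integral nn_gamma_scaled)
    (auto intro!: divide_nonneg_nonneg less_imp_le[OF Gamma_real_pos])

lemma integrable_inv1sq: "integrable lborel (\<lambda>x::real. inverse (1 + x^2))"
  using integrable_inverse_1_plus_square unfolding set_integrable_def by simp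

lemma g_le: "n \<ge> 1 \<Longrightarrow> g n x \<le> inverse (1 + x^2)"
proof -
  assume n: "n \<ge> 1"
  have "(1 + x^2) ^ 1 \<le> (1 + x^2) ^ n"
    using n by (intro power_increasing) auto
  then show ?thesis unfolding g_def inverse_eq_divide
    by (intro divide_left_mono) (auto intro!: mult_pos_pos add_pos_nonneg zero_less_power)
qed

lemma g_nonneg: "g n x \<ge> 0" unfolding g_def by simp

lemma g_measurable[measurable]: "g n \<in> borel_measurable borel"
  unfolding g_def[abs_def] by measurable

lemma integrable_g: "n \<ge> 1 \<Longrightarrow> integrable lborel (g n)"
  by (rule Bochner_Integration.integrable_bound[OF integrable_inv1sq])
     (auto simp: g_def g_le[unfolded g_def])


definition Pk :: "nat \<Rightarrow> real \<Rightarrow> real \<Rightarrow> real" where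
  "Pk n \<omega> u = indicator {0<..} u * (sqrt pi / fact (n-1)) * u powr (real n - 3/2) * exp (-u - \<omega>\<^sup>2/(4*u))"

lemma Gamma_real_nat: "n \<ge> 1 \<Longrightarrow> Gamma (real n) = fact (n-1)"
proof -
  assume "n \<ge> 1"
  then have "real n = 1 + real (n-1)" by simp
  then show ?thesis by (simp only: Gamma_fact)
qed

lemma ghat_integrable: "n \<ge> 1 \<Longrightarrow> integrable lborel (\<lambda>x. complex_of_real (g n x) * exp (\<i> * complex_of_real (\<omega>*x)))"
  by (rule Bochner_Integration.integrable_bound[OF integrable_g])
     (auto simp: norm_mult g_nonneg)

lemma ghat_lborel: "n \<ge> 1 \<Longrightarrow> ghat n \<omega> = (\<integral>x. complex_of_real (g n x) * exp (\<i> * complex_of_real (\<omega>*x)) \<partial>lborel)"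
  unfolding ghat_def by (rule integral_unique[OF has_integral_integral_lborel[OF ghat_integrable]])

lemma ghat_eq:
  assumes n: "n \<ge> 1"
  shows "ghat n \<omega> = complex_of_real (\<integral>u. Pk n \<omega> u \<partial>lborel)"
proof -
  define A where "A x u = indicator {0<..} u * u powr (real n - 1) * exp (-((1+x\<^sup>2)*u)) / fact (n-1)" for x u :: real
  define F where "F x u = complex_of_real (A x u) * exp (\<i> * complex_of_real (\<omega>*x))" for x u
  have Ann: "A x u \<ge> 0" for x u by (simp add: A_def)
  have A_int: "has_bochner_integral lborel (A x) (g n x)" for x
  proof -
    have c: "1 + x\<^sup>2 > 0" by (simp add: add_pos_nonneg)
    have "has_bochner_integral lborel (\<lambda>u. indicator {0<..} u * u powr (real n - 1) * exp (-((1+x\<^sup>2)*u)) / fact (n-1))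
            (Gamma (real n) / (1+x\<^sup>2) powr (real n) / fact (n-1))"
      using n c by (intro has_bochner_integral_divide_zero bochner_gamma_scaled) auto
    also have "Gamma (real n) / (1+x\<^sup>2) powr (real n) / fact (n-1) = g n x"
      using n c by (simp add: Gamma_real_nat powr_realpow g_def)
    finally show ?thesis unfolding A_def[abs_def] .
  qed
  have meas[measurable]: "(\<lambda>(x,u). F x u) \<in> borel_measurable (lborel \<Otimes>\<^sub>M lborel)"
    unfolding F_def A_def by measurable
  have nnA: "(\<integral>\<^sup>+u. ennreal (A x u) \<partial>lborel) = ennreal (g n x)" for x
    using A_int[of x] by (subst nn_integral_eq_integral) (auto simp: has_bochner_integral_iff Ann)
  have integ: "integrable (lborel \<Otimes>\<^sub>M lborel) (\<lambda>(x,u). F x u)"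
  proof (subst integrable_iff_bounded, intro conjI meas)
    have "(\<integral>\<^sup>+z. ennreal (norm (case z of (x,u) \<Rightarrow> F x u)) \<partial>(lborel \<Otimes>\<^sub>M lborel))
        = (\<integral>\<^sup>+x. \<integral>\<^sup>+u. ennreal (norm (F x u)) \<partial>lborel \<partial>lborel)"
      by (subst lborel.nn_integral_fst[symmetric]) auto
    also have "\<dots> = (\<integral>\<^sup>+x. ennreal (g n x) \<partial>lborel)"
      by (simp add: F_def norm_mult Ann nnA)
    also have "\<dots> = ennreal (integral\<^sup>L lborel (g n))"
      using integrable_g[OF n] by (subst nn_integral_eq_integral) (auto simp: g_nonneg)
    finally show "(\<integral>\<^sup>+z. ennreal (norm (case z of (x,u) \<Rightarrow> F x u)) \<partial>(lborel \<Otimes>\<^sub>M lborel)) < \<infinity>"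
      by simp
  qed
  have fub: "(\<integral>u. (\<integral>x. F x u \<partial>lborel) \<partial>lborel) = (\<integral>x. (\<integral>u. F x u \<partial>lborel) \<partial>lborel)"
    by (rule lborel_pair.Fubini_integral[OF integ])
  have inner1: "(\<integral>u. F x u \<partial>lborel) = complex_of_real (g n x) * exp (\<i> * complex_of_real (\<omega>*x))" for x
    unfolding F_def using A_int[of x]
    by (simp add: integral_mult_left_zero has_bochner_integral_integral_eq)
  have inner2: "(\<integral>x. F x u \<partial>lborel) = complex_of_real (Pk n \<omega> u)" for u
  proof (cases "u > 0")
    case False
    then show ?thesis by (simp add: F_def A_def Pk_def)
  next
    case True
    define B where "B = u powr (real n - 1) * exp (-u) / fact (n-1)"
    have r: "B * (sqrt (pi/u) * exp (-(\<omega>\<^sup>2/(4*u)))) = Pk n \<omega> u"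
    proof -
      have "sqrt (pi/u) = sqrt pi / u powr (1/2)"
        using True by (simp add: real_sqrt_divide powr_half_sqrt)
      moreover have "u powr (real n - 1) / u powr (1/2) = u powr (real n - 3/2)"
        using True by (simp add: powr_diff[symmetric])
      moreover have "exp (-u - \<omega>\<^sup>2/(4*u)) = exp (-u) * exp (-(\<omega>\<^sup>2/(4*u)))"
        by (simp add: exp_add[symmetric])
      ultimately show ?thesis
        using True unfolding B_def Pk_def by (simp add: field_simps)
    qed
    have "F x u = complex_of_real B * (complex_of_real (exp (-(u*x\<^sup>2))) * exp (\<i> * complex_of_real (\<omega>*x)))" for x
    proof -
      have "A x u = B * exp (-(u*x\<^sup>2))"
        using True by (simp add: A_def B_def algebra_simps exp_add[symmetric])
      then show ?thesis by (simp add: F_def mult.assoc)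
    qed
    then have "(\<integral>x. F x u \<partial>lborel) = (\<integral>x. complex_of_real B * (complex_of_real (exp (-(u*x\<^sup>2))) * exp (\<i> * complex_of_real (\<omega>*x))) \<partial>lborel)"
      by simp
    also have "\<dots> = complex_of_real B * (\<integral>x. complex_of_real (exp (-(u*x\<^sup>2))) * exp (\<i> * complex_of_real (\<omega>*x)) \<partial>lborel)"
      by (rule integral_mult_right_zero)
    also have "\<dots> = complex_of_real B * complex_of_real (sqrt (pi/u) * exp (-(\<omega>\<^sup>2/(4*u))))"
      by (simp only: gauss_ft[OF True])
    also have "complex_of_real B * complex_of_real (sqrt (pi/u) * exp (-(\<omega>\<^sup>2/(4*u)))) = complex_of_real (Pk n \<omega> u)"
      by (simp only: of_real_mult[symmetric] r)
    finally show ?thesis by simp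
  qed
  have "ghat n \<omega> = (\<integral>x. (\<integral>u. F x u \<partial>lborel) \<partial>lborel)"
    by (simp add: inner1 ghat_lborel[OF n])
  also have "\<dots> = (\<integral>u. complex_of_real (Pk n \<omega> u) \<partial>lborel)"
    by (simp add: fub[symmetric] inner2)
  finally show ?thesis by simp
qed

lemma nn_W:
  fixes a :: real assumes a: "a > 0"
  shows "(\<integral>\<^sup>+w. ennreal (w^3 * exp (-(a*w\<^sup>2))) * indicator {0..} w \<partial>lborel) = ennreal (1/(2*a\<^sup>2))"
proof -
  define F where "F w = -(a*w\<^sup>2+1) * exp (-(a*w\<^sup>2)) / (2*a\<^sup>2)" for w
  have "(\<integral>\<^sup>+w. ennreal (w^3 * exp (-(a*w\<^sup>2))) * indicator {0..} w \<partial>lborel) = ennreal (0 - F 0)"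
  proof (rule nn_integral_FTC_atLeast)
    show "(\<lambda>w. w^3 * exp (-(a*w\<^sup>2))) \<in> borel_measurable borel" by measurable
    fix w :: real assume w: "0 \<le> w"
    show "0 \<le> w^3 * exp (-(a*w\<^sup>2))" using w by simp
    show "(F has_real_derivative w^3 * exp (-(a*w\<^sup>2))) (at w)"
      unfolding F_def using a
      by (auto intro!: derivative_eq_intros simp: field_simps power2_eq_square power3_eq_cube)
  next
    show "(F \<longlongrightarrow> 0) at_top" unfolding F_def using a by real_asymp
  qed
  also have "0 - F 0 = 1/(2*a\<^sup>2)" by (simp add: F_def)
  finally show ?thesis .
qed

lemma invpow_aux: fixes y q c :: real assumes "y \<noteq> 0" "q \<noteq> 0"
  shows "- (inverse (y*q) * (c * q) * inverse (y*q)) = - c / (y*(y*q))"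
  using assms by (simp add: field_simps)

lemma deriv_invpow:
  fixes l :: real assumes "l > -1"
  shows "((\<lambda>l. 1/(1+l)^k) has_real_derivative (-(real k)/(1+l)^(Suc k))) (at l)"
proof -
  have p: "1 + l \<noteq> 0" using assms by simp
  have D1: "((\<lambda>l. (1+l)^k) has_real_derivative real k * (1+l)^(k-1)) (at l)"
    by (auto intro!: derivative_eq_intros)
  have D2: "((\<lambda>l. inverse ((1+l)^k)) has_real_derivative - (inverse ((1+l)^k) * (real k * (1+l)^(k-1)) * inverse ((1+l)^k))) (at l)"
    by (rule DERIV_inverse'[OF D1]) (simp add: p)
  have e: "- (inverse ((1+l)^k) * (real k * (1+l)^(k-1)) * inverse ((1+l)^k)) = -(real k)/(1+l)^(Suc k)"
  proof (cases k)
    case (Suc j)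
    have q: "(1+l)^j \<noteq> 0" using p by simp
    show ?thesis unfolding Suc power_Suc diff_Suc_1 by (rule invpow_aux[OF p q])
  qed simp
  show ?thesis using D2 unfolding e by (simp add: inverse_eq_divide)
qed

lemma alg_aux: fixes M1 M2 y A :: real assumes "M1 \<noteq> 0" "M2 \<noteq> 0" "y \<noteq> 0" "A \<noteq> 0"
  shows "(1/M1)*(-M1/(A*y)) - (1/M2)*(-M2/A) = (y - 1)/(A*y)"
  using assms by (simp add: field_simps)

lemma nn_V:
  fixes m :: nat assumes m: "m \<ge> 3"
  shows "(\<integral>\<^sup>+l. ennreal (l / (1+l)^m) * indicator {0..} l \<partial>lborel) = ennreal (1/((real m - 1)*(real m - 2)))"
proof -
  define F where "F l = (1/(real m - 1)) * (1/(1+l)^(m-1)) - (1/(real m - 2)) * (1/(1+l)^(m-2))" for l :: real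
  have lim0: "((\<lambda>l::real. 1/(1+l)^k) \<longlongrightarrow> 0) at_top" if "k \<ge> 1" for k :: nat
  proof -
    have "filterlim (\<lambda>l::real. 1+l) at_top at_top" by real_asymp
    then have "filterlim (\<lambda>l::real. (1+l)^k) at_top at_top"
      using that by (intro filterlim_pow_at_top) auto
    then show ?thesis unfolding inverse_eq_divide[symmetric] by (rule tendsto_inverse_0_at_top)
  qed
  have "(\<integral>\<^sup>+l. ennreal (l / (1+l)^m) * indicator {0..} l \<partial>lborel) = ennreal (0 - F 0)"
  proof (rule nn_integral_FTC_atLeast)
    show "(\<lambda>l::real. l / (1+l)^m) \<in> borel_measurable borel" by measurable
    fix l :: real assume l: "0 \<le> l"
    show "0 \<le> l / (1+l)^m" using l by simp
    have e1: "Suc (m-1) = m" "Suc (m-2) = m-1" using m by auto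
    have r1: "real (m - 1) = real m - 1" "real (m-2) = real m - 2" using m by auto
    have "(F has_real_derivative (1/(real m - 1)) * (-(real (m-1))/(1+l)^(Suc (m-1))) - (1/(real m - 2)) * (-(real (m-2))/(1+l)^(Suc (m-2)))) (at l)"
      unfolding F_def using l by (intro DERIV_diff DERIV_cmult deriv_invpow) auto
    also have "(1/(real m - 1)) * (-(real (m-1))/(1+l)^(Suc (m-1))) - (1/(real m - 2)) * (-(real (m-2))/(1+l)^(Suc (m-2))) = l / (1+l)^m"
    proof -
      have p: "1 + l \<noteq> 0" using l by simp
      have pm: "(1+l)^m = (1+l)^(m-1) * (1+l)" using e1 by (metis power_Suc2)
      have A: "(1+l)^(m-1) \<noteq> 0" using p by simp
      have M: "real m - 1 \<noteq> 0" "real m - 2 \<noteq> 0" using m by auto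
      have "(1/(real m - 1)) * (-(real m - 1)/((1+l)^(m-1) * (1+l))) - (1/(real m - 2)) * (-(real m - 2)/(1+l)^(m-1))
            = ((1+l) - 1) / ((1+l)^(m-1) * (1+l))"
        by (rule alg_aux[OF M p A])
      then show ?thesis unfolding e1 r1 pm by simp
    qed
    finally show "(F has_real_derivative l / (1+l)^m) (at l)" .
  next
    have "(F \<longlongrightarrow> (1/(real m - 1)) * 0 - (1/(real m - 2)) * 0) at_top" unfolding F_def using m
      by (intro tendsto_diff tendsto_mult tendsto_const lim0) auto
    then show "(F \<longlongrightarrow> 0) at_top" by simp
  qed
  also have "0 - F 0 = 1/((real m - 1)*(real m - 2))"
    using m by (simp add: F_def field_simps)
  finally show ?thesis .
qed


lemma nn_prod:
  fixes f g :: "real \<Rightarrow> real"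
  assumes [measurable]: "f \<in> borel_measurable borel" "g \<in> borel_measurable borel"
    and "\<And>x. f x \<ge> 0" "\<And>y. g y \<ge> 0"
  shows "(\<integral>\<^sup>+x. \<integral>\<^sup>+y. ennreal (f x * g y) \<partial>lborel \<partial>lborel) = (\<integral>\<^sup>+x. ennreal (f x) \<partial>lborel) * (\<integral>\<^sup>+y. ennreal (g y) \<partial>lborel)"
proof -
  have "(\<integral>\<^sup>+x. \<integral>\<^sup>+y. ennreal (f x * g y) \<partial>lborel \<partial>lborel) = (\<integral>\<^sup>+x. ennreal (f x) * (\<integral>\<^sup>+y. ennreal (g y) \<partial>lborel) \<partial>lborel)"
    using assms(3,4) by (intro nn_integral_cong) (simp add: ennreal_mult nn_integral_cmult)
  also have "\<dots> = (\<integral>\<^sup>+x. ennreal (f x) \<partial>lborel) * (\<integral>\<^sup>+y. ennreal (g y) \<partial>lborel)"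
    by (rule nn_integral_multc) measurable
  finally show ?thesis .
qed

lemma tonelli_swap3:
  fixes f :: "real \<Rightarrow> real \<Rightarrow> real \<Rightarrow> ennreal"
  assumes m1: "(\<lambda>p. f (fst (fst p)) (snd (fst p)) (snd p)) \<in> borel_measurable ((lborel \<Otimes>\<^sub>M lborel) \<Otimes>\<^sub>M lborel)"
    and m2: "\<And>y. (\<lambda>p. f (fst p) y (snd p)) \<in> borel_measurable (lborel \<Otimes>\<^sub>M lborel)"
  shows "(\<integral>\<^sup>+x. \<integral>\<^sup>+y. \<integral>\<^sup>+z. f x y z \<partial>lborel \<partial>lborel \<partial>lborel) = (\<integral>\<^sup>+y. \<integral>\<^sup>+z. \<integral>\<^sup>+x. f x y z \<partial>lborel \<partial>lborel \<partial>lborel)"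
proof -
  have mG: "(\<lambda>(x,y). \<integral>\<^sup>+z. f x y z \<partial>lborel) \<in> borel_measurable (lborel \<Otimes>\<^sub>M lborel)"
    using lborel.borel_measurable_nn_integral[of "\<lambda>xy z. f (fst xy) (snd xy) z" "lborel \<Otimes>\<^sub>M lborel"] m1
    by (simp add: case_prod_beta' split_beta')
  have "(\<integral>\<^sup>+x. \<integral>\<^sup>+y. \<integral>\<^sup>+z. f x y z \<partial>lborel \<partial>lborel \<partial>lborel) = (\<integral>\<^sup>+y. \<integral>\<^sup>+x. \<integral>\<^sup>+z. f x y z \<partial>lborel \<partial>lborel \<partial>lborel)"
    by (rule lborel_pair.Fubini'[symmetric]) (use mG in simp)
  also have "\<dots> = (\<integral>\<^sup>+y. \<integral>\<^sup>+z. \<integral>\<^sup>+x. f x y z \<partial>lborel \<partial>lborel \<partial>lborel)"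
    by (intro nn_integral_cong lborel_pair.Fubini'[symmetric]) (use m2 in simp)
  finally show ?thesis .
qed


lemma Pk_nonneg: "Pk n \<omega> u \<ge> 0" by (simp add: Pk_def)

lemma Pk_measurable[measurable]:
  fixes f g :: "'a \<Rightarrow> real"
  assumes [measurable]: "f \<in> borel_measurable M" "g \<in> borel_measurable M"
  shows "(\<lambda>x. Pk n (f x) (g x)) \<in> borel_measurable M"
  unfolding Pk_def by measurable

lemma Pk_integrable:
  assumes n: "n \<ge> 1" shows "integrable lborel (Pk n \<omega>)"
proof (rule Bochner_Integration.integrable_bound)
  have "integrable lborel (\<lambda>u. indicator {0<..} u * u powr ((real n - 1/2) - 1) * exp(-(1*u)))"
    using bochner_gamma_scaled[of "real n - 1/2" 1] n by (auto simp: integrable.intros)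
  then show "integrable lborel (\<lambda>u. (sqrt pi / fact (n-1)) * (indicator {0<..} u * u powr ((real n - 1/2) - 1) * exp(-(1*u))))"
    by (rule integrable_mult_right)
  show "Pk n \<omega> \<in> borel_measurable lborel" unfolding Pk_def by measurable
  show "AE x in lborel. norm (Pk n \<omega> x) \<le> norm ((sqrt pi / fact (n-1)) * (indicator {0<..} x * x powr ((real n - 1/2) - 1) * exp(-(1*x))))"
  proof (rule AE_I2)
    fix u :: real
    show "norm (Pk n \<omega> u) \<le> norm ((sqrt pi / fact (n-1)) * (indicator {0<..} u * u powr ((real n - 1/2) - 1) * exp(-(1*u))))"
    proof (cases "u > 0")
      case True
      have "exp (-u - \<omega>\<^sup>2/(4*u)) \<le> exp (-u)" using True by simp
      moreover have "(real n - 1/2) - 1 = real n - 3/2" by simp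
      ultimately show ?thesis using True unfolding Pk_def
        by (simp add: abs_mult) (intro divide_right_mono mult_left_mono, auto)
    qed (simp add: Pk_def)
  qed
qed

definition Sk :: "nat \<Rightarrow> real \<Rightarrow> real \<Rightarrow> real \<Rightarrow> real" where
  "Sk n u v l = indicator {0<..} l * l * 8 * (sqrt pi / fact (n-1))\<^sup>2 *
     (indicator {0<..} u * u powr (real n + 1/2) * exp (-((1+l)*u))) *
     (indicator {0<..} v * v powr (real n + 1/2) * exp (-((1+l)* v)))"

lemma ac_aux: "(i::real) * w3 * (c*p*E1) * (c*q*E2) = (c\<^sup>2*p*q) * (w3*i) * (E1*E2)"
  by (simp add: power2_eq_square mult_ac)

lemma ac_aux2: "(i::real) * l * 8 * c * (j*U*E1) * (k*V*E2) = (8*c*U*V) * (i*j*k*l) * (E1*E2)"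
  by (simp add: mult_ac)

lemma a2_aux: fixes u v s :: real assumes "u > 0" "v > 0" "s > 0"
  shows "1/(2*(s/(4*u* v))\<^sup>2) = 8*u\<^sup>2* v\<^sup>2/s\<^sup>2"
  using assms by (simp add: power2_eq_square field_simps)

lemma step3:
  assumes n: "n \<ge> 1"
  shows "(\<integral>\<^sup>+w. ennreal (indicator {0..} w * w^3 * Pk n w u * Pk n w v) \<partial>lborel) = (\<integral>\<^sup>+l. ennreal (Sk n u v l) \<partial>lborel)"
proof (cases "u > 0 \<and> v > 0")
  case False
  then show ?thesis by (auto simp: Pk_def Sk_def)
next
  case True
  then have u: "u > 0" and v: "v > 0" by auto
  define cc where "cc = sqrt pi / fact (n-1)"
  define e where "e = real n - 3/2"
  define a where "a = 1/(4*u) + 1/(4* v)"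
  define C1 where "C1 = cc\<^sup>2 * u powr e * v powr e * exp (-u-v)"
  define C2 where "C2 = 8 * cc\<^sup>2 * u powr (real n + 1/2) * v powr (real n + 1/2) * exp (-u-v)"
  have a: "a > 0" using u v unfolding a_def by (intro add_pos_pos) auto
  have C1: "C1 \<ge> 0" by (simp add: C1_def)
  have C2: "C2 \<ge> 0" by (simp add: C2_def)
  have uv: "u + v > 0" using u v by simp
  have L: "(\<integral>\<^sup>+w. ennreal (indicator {0..} w * w^3 * Pk n w u * Pk n w v) \<partial>lborel)
      = (\<integral>\<^sup>+w. ennreal C1 * (ennreal (w^3 * exp (-(a*w\<^sup>2))) * indicator {0..} w) \<partial>lborel)"
  proof (rule nn_integral_cong)
    fix w :: real
    have ex: "exp (-u - w\<^sup>2/(4*u)) * exp (-v - w\<^sup>2/(4* v)) = exp (-u-v) * exp (-(a*w\<^sup>2))"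
      using u v by (simp add: exp_add[symmetric] a_def field_simps)
    have Pu: "Pk n w u = cc * u powr e * exp (-u - w\<^sup>2/(4*u))" using u by (simp add: Pk_def cc_def e_def)
    have Pv: "Pk n w v = cc * v powr e * exp (-v - w\<^sup>2/(4* v))" using v by (simp add: Pk_def cc_def e_def)
    have "indicator {0..} w * w^3 * Pk n w u * Pk n w v = (cc\<^sup>2 * u powr e * v powr e) * (w^3 * indicator {0..} w) * (exp (-u - w\<^sup>2/(4*u)) * exp (-v - w\<^sup>2/(4* v)))"
      unfolding Pu Pv by (rule ac_aux)
    also have "\<dots> = C1 * (w^3 * exp (-(a*w\<^sup>2)) * indicator {0..} w)"
      unfolding ex C1_def by (simp only: mult_ac)
    finally have "indicator {0..} w * w^3 * Pk n w u * Pk n w v = C1 * (w^3 * exp (-(a*w\<^sup>2)) * indicator {0..} w)" .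
    then show "ennreal (indicator {0..} w * w^3 * Pk n w u * Pk n w v) = ennreal C1 * (ennreal (w^3 * exp (-(a*w\<^sup>2))) * indicator {0..} w)"
      using C1 by (simp only: ennreal_mult'[OF C1] ennreal_mult''[OF indicator_pos_le] ennreal_indicator)
  qed
  also have "\<dots> = ennreal C1 * ennreal (1/(2*a\<^sup>2))"
    by (subst nn_integral_cmult) (simp_all add: nn_W[OF a])
  also have "\<dots> = ennreal (C1/(2*a\<^sup>2))"
    using C1 by (simp add: ennreal_mult[symmetric])
  finally have L: "(\<integral>\<^sup>+w. ennreal (indicator {0..} w * w^3 * Pk n w u * Pk n w v) \<partial>lborel) = ennreal (C1/(2*a\<^sup>2))" .
  have R: "(\<integral>\<^sup>+l. ennreal (Sk n u v l) \<partial>lborel) = (\<integral>\<^sup>+l. ennreal C2 * ennreal (indicator {0<..} l * l powr (2-1) * exp(-((u+v)*l))) \<partial>lborel)"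
  proof (rule nn_integral_cong)
    fix l :: real
    have ex: "exp (-((1+l)*u)) * exp (-((1+l)* v)) = exp (-u-v) * exp (-((u+v)*l))"
      by (simp add: exp_add[symmetric] field_simps)
    have "Sk n u v l = C2 * (indicator {0<..} l * l powr (2-1) * exp(-((u+v)*l)))"
    proof (cases "l > 0")
      case True
      have "Sk n u v l = (8 * (sqrt pi / fact (n-1))\<^sup>2 * u powr (real n + 1/2) * v powr (real n + 1/2)) *
          (indicator {0<..} l * indicator {0<..} u * indicator {0<..} v * l) * (exp (-((1+l)*u)) * exp (-((1+l)* v)))"
        unfolding Sk_def by (rule ac_aux2)
      also have "\<dots> = C2 * (indicator {0<..} l * l powr (2-1) * exp(-((u+v)*l)))"
        unfolding ex using True u v by (simp add: C2_def cc_def mult_ac)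
      finally show ?thesis .
    qed (simp add: Sk_def)
    then show "ennreal (Sk n u v l) = ennreal C2 * ennreal (indicator {0<..} l * l powr (2-1) * exp(-((u+v)*l)))"
      using C2 by (simp add: ennreal_mult[symmetric])
  qed
  also have "\<dots> = ennreal C2 * (\<integral>\<^sup>+l. ennreal (indicator {0<..} l * l powr (2-1) * exp(-((u+v)*l))) \<partial>lborel)"
    by (rule nn_integral_cmult) measurable
  also have "\<dots> = ennreal C2 * ennreal (Gamma 2 / (u+v) powr 2)"
    by (subst nn_gamma_scaled[OF _ uv]) simp_all
  also have "\<dots> = ennreal (C2/(u+v)\<^sup>2)"
    using C2 uv Gamma_real_nat[of 2] by (simp add: ennreal_mult[symmetric])
  finally have R: "(\<integral>\<^sup>+l. ennreal (Sk n u v l) \<partial>lborel) = ennreal (C2/(u+v)\<^sup>2)" .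
  have "C1/(2*a\<^sup>2) = C2/(u+v)\<^sup>2"
  proof -
    have pu: "u powr (real n + 1/2) = u powr e * u\<^sup>2"
    proof -
      have "u powr (real n + 1/2) = u powr (e + 2)" by (simp add: e_def add.commute)
      also have "\<dots> = u powr e * u powr 2" by (rule powr_add)
      also have "u powr 2 = u\<^sup>2" using u by (simp add: powr_numeral)
      finally show ?thesis .
    qed
    have pv: "v powr (real n + 1/2) = v powr e * v\<^sup>2"
    proof -
      have "v powr (real n + 1/2) = v powr (e + 2)" by (simp add: e_def add.commute)
      also have "\<dots> = v powr e * v powr 2" by (rule powr_add)
      also have "v powr 2 = v\<^sup>2" using v by (simp add: powr_numeral)
      finally show ?thesis .
    qed
    have ae: "a = (u+v)/(4*u* v)" using u v by (simp add: a_def field_simps)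
    have a2: "1/(2*a\<^sup>2) = 8*u\<^sup>2* v\<^sup>2/(u+v)\<^sup>2" unfolding ae using u v uv
      by (rule a2_aux)
    have c2: "C2 = C1 * (8*u\<^sup>2* v\<^sup>2)" unfolding C1_def C2_def pu pv by (simp only: mult_ac)
    have "C1/(2*a\<^sup>2) = C1 * (1/(2*a\<^sup>2))" by simp
    also have "\<dots> = C2/(u+v)\<^sup>2" unfolding a2 c2 by simp
    finally show ?thesis .
  qed
  then show ?thesis using L R by simp
qed


lemma k_aux: fixes P l c G :: real assumes "P > 0"
  shows "l * 8 * c * (G / P) * (G / P) = (8 * c * G\<^sup>2) * (l / (P * P))"
  using assms by (simp add: power2_eq_square field_simps)

lemma step4:
  assumes n: "n \<ge> 1"
  shows "(\<integral>\<^sup>+u. \<integral>\<^sup>+v. ennreal (Sk n u v l) \<partial>lborel \<partial>lborel)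
    = ennreal (8 * (sqrt pi / fact (n-1))\<^sup>2 * (Gamma (real n + 3/2))\<^sup>2) * (ennreal (l / (1+l)^(2*n+3)) * indicator {0..} l)"
proof (cases "l > 0")
  case False
  then show ?thesis by (cases "l = 0") (auto simp: Sk_def)
next
  case True
  define k where "k = l * 8 * (sqrt pi / fact (n-1))\<^sup>2"
  define f where "f u = indicator {0<..} u * u powr ((real n + 3/2) - 1) * exp (-((1+l)*u))" for u :: real
  define G where "G = Gamma (real n + 3/2)"
  have k: "k \<ge> 0" using True by (simp add: k_def)
  have f: "f u \<ge> 0" for u by (simp add: f_def)
  have fm[measurable]: "f \<in> borel_measurable borel" unfolding f_def by measurable
  have ex: "(real n + 3/2) - 1 = real n + 1/2" by simp
  have Sk: "Sk n u v l = (k * f u) * f v" for u v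
    using True unfolding Sk_def k_def f_def ex by (simp add: mult_ac)
  have l1: "1 + l > 0" using True by simp
  have If: "(\<integral>\<^sup>+u. ennreal (f u) \<partial>lborel) = ennreal (G / (1+l) powr (real n + 3/2))"
    unfolding f_def G_def by (rule nn_gamma_scaled) (use l1 in auto)
  have "(\<integral>\<^sup>+u. \<integral>\<^sup>+v. ennreal (Sk n u v l) \<partial>lborel \<partial>lborel)
      = (\<integral>\<^sup>+u. ennreal (k * f u) \<partial>lborel) * (\<integral>\<^sup>+v. ennreal (f v) \<partial>lborel)"
    unfolding Sk by (rule nn_prod) (auto intro: mult_nonneg_nonneg k f)
  also have "(\<integral>\<^sup>+u. ennreal (k * f u) \<partial>lborel) = ennreal k * (\<integral>\<^sup>+u. ennreal (f u) \<partial>lborel)"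
    using k by (simp add: ennreal_mult' nn_integral_cmult)
  also have "ennreal k * (\<integral>\<^sup>+u. ennreal (f u) \<partial>lborel) * (\<integral>\<^sup>+v. ennreal (f v) \<partial>lborel)
      = ennreal (k * (G / (1+l) powr (real n + 3/2)) * (G / (1+l) powr (real n + 3/2)))"
  proof -
    have Gq: "G / (1+l) powr (real n + 3/2) \<ge> 0" unfolding G_def by (auto intro!: less_imp_le[OF Gamma_real_pos])
    show ?thesis unfolding If using k Gq mult_nonneg_nonneg[OF k Gq]
      by (simp only: ennreal_mult[symmetric])
  qed
  also have "k * (G / (1+l) powr (real n + 3/2)) * (G / (1+l) powr (real n + 3/2))
      = (8 * (sqrt pi / fact (n-1))\<^sup>2 * G\<^sup>2) * (l / (1+l)^(2*n+3))"
  proof -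
    have "(1+l) powr (real n + 3/2) * (1+l) powr (real n + 3/2) = (1+l) powr (real (2*n+3))"
      by (simp add: powr_add[symmetric])
    also have "\<dots> = (1+l)^(2*n+3)" using l1 by (rule powr_realpow)
    finally have pp: "(1+l) powr (real n + 3/2) * (1+l) powr (real n + 3/2) = (1+l)^(2*n+3)" .
    have P: "(1+l) powr (real n + 3/2) > 0" using l1 by simp
    show ?thesis unfolding k_def pp[symmetric]
      by (rule k_aux[OF P])
  qed
  finally have fin: "(\<integral>\<^sup>+u. \<integral>\<^sup>+v. ennreal (Sk n u v l) \<partial>lborel \<partial>lborel) =
    ennreal ((8 * (sqrt pi / fact (n-1))\<^sup>2 * G\<^sup>2) * (l / (1+l)^(2*n+3)))" .
  have Cnn: "8 * (sqrt pi / fact (n-1))\<^sup>2 * G\<^sup>2 \<ge> 0" by simp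
  have ind1: "indicator {0..} l = (1::ennreal)" using True by simp
  show ?thesis unfolding fin ind1 G_def mult_1_right by (rule ennreal_mult'[OF Cnn[unfolded G_def]])
qed


lemma Sk_measurable[measurable]:
  fixes f g h :: "'a \<Rightarrow> real"
  assumes [measurable]: "f \<in> borel_measurable M" "g \<in> borel_measurable M" "h \<in> borel_measurable M"
  shows "(\<lambda>x. Sk n (f x) (g x) (h x)) \<in> borel_measurable M"
  unfolding Sk_def by measurable

lemma H_nn:
  assumes n: "n \<ge> 1"
  shows "ennreal (\<integral>u. Pk n w u \<partial>lborel) = (\<integral>\<^sup>+u. ennreal (Pk n w u) \<partial>lborel)"
  using Pk_integrable[OF n] by (subst nn_integral_eq_integral) (auto simp: Pk_nonneg)

lemma main_nn:
  assumes n: "n \<ge> 1"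
  shows "(\<integral>\<^sup>+w. ennreal (w^3 * (\<integral>u. Pk n w u \<partial>lborel)\<^sup>2 * indicator {0..} w) \<partial>lborel)
    = ennreal (8 * (sqrt pi / fact (n-1))\<^sup>2 * (Gamma (real n + 3/2))\<^sup>2 / ((2*real n + 2) * (2*real n + 1)))"
proof -
  define C where "C = 8 * (sqrt pi / fact (n-1))\<^sup>2 * (Gamma (real n + 3/2))\<^sup>2"
  have Cnn: "C \<ge> 0" by (simp add: C_def)
  have s1: "ennreal (w^3 * (\<integral>u. Pk n w u \<partial>lborel)\<^sup>2 * indicator {0..} w)
      = (\<integral>\<^sup>+u. \<integral>\<^sup>+v. ennreal (indicator {0..} w * w^3 * Pk n w u * Pk n w v) \<partial>lborel \<partial>lborel)" for w
  proof -
    define a where "a = indicator {0..} w * w^3"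
    have a: "a \<ge> 0" by (simp add: a_def indicator_def)
    have "(\<integral>\<^sup>+u. \<integral>\<^sup>+v. ennreal (indicator {0..} w * w^3 * Pk n w u * Pk n w v) \<partial>lborel \<partial>lborel)
        = (\<integral>\<^sup>+u. ennreal (a * Pk n w u) \<partial>lborel) * (\<integral>\<^sup>+v. ennreal (Pk n w v) \<partial>lborel)"
      unfolding a_def[symmetric] mult.assoc[of a]
      by (subst mult.assoc[symmetric], rule nn_prod) (use a Pk_nonneg in auto)
    also have "(\<integral>\<^sup>+u. ennreal (a * Pk n w u) \<partial>lborel) = ennreal a * (\<integral>\<^sup>+u. ennreal (Pk n w u) \<partial>lborel)"
      using a by (simp add: ennreal_mult nn_integral_cmult Pk_nonneg)
    also have "ennreal a * (\<integral>\<^sup>+u. ennreal (Pk n w u) \<partial>lborel) * (\<integral>\<^sup>+v. ennreal (Pk n w v) \<partial>lborel)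
        = ennreal (a * (\<integral>u. Pk n w u \<partial>lborel) * (\<integral>u. Pk n w u \<partial>lborel))"
    proof -
      have h: "(\<integral>u. Pk n w u \<partial>lborel) \<ge> 0" by (simp add: Pk_nonneg)
      show ?thesis unfolding H_nn[OF n, symmetric] using a h mult_nonneg_nonneg[OF a h]
        by (simp only: ennreal_mult[symmetric])
    qed
    also have "a * (\<integral>u. Pk n w u \<partial>lborel) * (\<integral>u. Pk n w u \<partial>lborel) = w^3 * (\<integral>u. Pk n w u \<partial>lborel)\<^sup>2 * indicator {0..} w"
      by (simp add: a_def power2_eq_square mult_ac)
    finally show ?thesis by simp
  qed
  have "(\<integral>\<^sup>+w. ennreal (w^3 * (\<integral>u. Pk n w u \<partial>lborel)\<^sup>2 * indicator {0..} w) \<partial>lborel)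
      = (\<integral>\<^sup>+w. \<integral>\<^sup>+u. \<integral>\<^sup>+v. ennreal (indicator {0..} w * w^3 * Pk n w u * Pk n w v) \<partial>lborel \<partial>lborel \<partial>lborel)"
    by (simp only: s1)
  also have "\<dots> = (\<integral>\<^sup>+u. \<integral>\<^sup>+v. \<integral>\<^sup>+w. ennreal (indicator {0..} w * w^3 * Pk n w u * Pk n w v) \<partial>lborel \<partial>lborel \<partial>lborel)"
    by (rule tonelli_swap3) measurable
  also have "\<dots> = (\<integral>\<^sup>+u. \<integral>\<^sup>+v. \<integral>\<^sup>+l. ennreal (Sk n u v l) \<partial>lborel \<partial>lborel \<partial>lborel)"
    by (simp only: step3[OF n])
  also have "\<dots> = (\<integral>\<^sup>+l. \<integral>\<^sup>+u. \<integral>\<^sup>+v. ennreal (Sk n u v l) \<partial>lborel \<partial>lborel \<partial>lborel)"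
    by (rule tonelli_swap3[where f="\<lambda>l u v. ennreal (Sk n u v l)", symmetric]) measurable
  also have "\<dots> = (\<integral>\<^sup>+l. ennreal C * (ennreal (l / (1+l)^(2*n+3)) * indicator {0..} l) \<partial>lborel)"
    by (simp only: step4[OF n] C_def)
  also have "\<dots> = ennreal C * (\<integral>\<^sup>+l. ennreal (l / (1+l)^(2*n+3)) * indicator {0..} l \<partial>lborel)"
    by (rule nn_integral_cmult) measurable
  also have "\<dots> = ennreal C * ennreal (1/((real (2*n+3) - 1)*(real (2*n+3) - 2)))"
    by (subst nn_V) auto
  also have "\<dots> = ennreal (C / ((2*real n + 2) * (2*real n + 1)))"
    using Cnn by (simp add: ennreal_mult[symmetric] divide_inverse add.commute)
  finally show ?thesis by (simp add: C_def)
qed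

lemma gh_aux: fixes y A sp P fk :: real assumes "P > 0" "fk > 0" "y > 0"
  shows "(y - 1/2) * (A * sp / (P * fk)) = 2 * y * (2 * y - 1) * A * sp / (4 * P * (y * fk))"
  using assms by (simp add: field_simps)

lemma Gamma_half_int: "Gamma (real k + 1/2) = fact (2*k) * sqrt pi / (4^k * fact k)"
proof (induction k)
  case 0
  then show ?case by (simp add: Gamma_one_half_real)
next
  case (Suc k)
  have nz: "real k + 1/2 \<notin> \<int>\<^sub>\<le>\<^sub>0"
  proof
    assume "real k + 1/2 \<in> \<int>\<^sub>\<le>\<^sub>0"
    then have "real k + 1/2 \<le> 0" by (rule nonpos_Ints_nonpos)
    then show False by simp
  qed
  have "Gamma (real (Suc k) + 1/2) = Gamma ((real k + 1/2) + 1)" by (simp add: add_ac)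
  also have "\<dots> = (real k + 1/2) * Gamma (real k + 1/2)" by (rule Gamma_plus1[OF nz])
  also have "\<dots> = (real k + 1/2) * (fact (2*k) * sqrt pi / (4^k * fact k))" by (simp add: Suc.IH)
  also have "\<dots> = fact (2 * Suc k) * sqrt pi / (4 ^ Suc k * fact (Suc k))"
  proof -
    have e1: "fact (2 * Suc k) = ((2*(real k+1)) * (2*(real k+1) - 1) * fact (2*k) :: real)"
      by (simp add: algebra_simps)
    have e2: "(4::real) ^ Suc k = 4 * 4^k" by simp
    have e3: "(fact (Suc k) :: real) = (real k + 1) * fact k" by (simp add: algebra_simps)
    have e0: "real k + 1/2 = (real k + 1) - 1/2" by simp
    show ?thesis unfolding e0 e1 e2 e3 by (rule gh_aux) auto
  qed
  finally show ?case .
qed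

lemma alg: fixes a b c S Q F f :: real assumes "a > 0" "b > 0" "c > 0" "Q > 0" "F > 0" "f > 0"
  shows "8 * (S/f)^2 * ((2*b)*c*(2*a)*F*S/(16*Q*(b*a*f)))^2 / ((2*b)*c)
       = 2*(S*S)^2*a^2/(16*(Q*Q)) * (F/(a*f*f)) * (c*(2*a)*F/(a*f*(b*a*f)))"
  using assms by (simp add: field_simps power2_eq_square)

lemma final_alg:
  assumes n: "n \<ge> 1"
  shows "8 * (sqrt pi / fact (n-1))\<^sup>2 * (Gamma (real n + 3/2))\<^sup>2 / ((2*real n + 2) * (2*real n + 1))
    = 2 * pi\<^sup>2 * (real n)\<^sup>2 / 16 ^ n * real ((2*n - 1) choose n) * real ((2*n + 1) choose n)"
proof -
  obtain m where m: "n = Suc m" using n by (cases n) auto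
  define a where "a = real m + 1"
  define b where "b = real m + 2"
  define c where "c = 2 * real m + 3"
  define F where "F = (fact (2*m+1) :: real)"
  define f where "f = (fact m :: real)"
  define S where "S = sqrt pi"
  define Q where "Q = (4::real)^m"
  have pos: "a > 0" "b > 0" "c > 0" "Q > 0" "F > 0" "f > 0"
    by (simp_all add: a_def b_def c_def Q_def F_def f_def)
  have G: "Gamma (real n + 3/2) = fact (2*m+4) * sqrt pi / (4^(m+2) * fact (m+2))"
  proof -
    have h1: "real n + 3/2 = real (m+2) + 1/2" by (simp add: m)
    have h2: "2*(m+2) = 2*m+4" by simp
    show ?thesis unfolding h1 Gamma_half_int h2 ..
  qed
  have e1: "(fact (2*m+4) :: real) = (2*b)*c*(2*a)*F" unfolding F_def a_def b_def c_def
    by (simp add: numeral_eq_Suc algebra_simps)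
  have e3: "(fact (m+2) :: real) = b*a*f" unfolding f_def a_def b_def
    by (simp add: numeral_eq_Suc algebra_simps)
  have Q4: "(4::real)^(m+2) = 16 * Q" unfolding Q_def by simp
  have hG: "Gamma (real n + 3/2) = (2*b)*c*(2*a)*F*S/(16*Q*(b*a*f))"
    unfolding G e1 e3 Q4 S_def ..
  have hb1: "real ((2*n - 1) choose n) = F/(a*f*f)"
    unfolding m F_def a_def f_def by (subst binomial_fact) (auto simp: algebra_simps)
  have hb2: "real ((2*n + 1) choose n) = c*(2*a)*F/(a*f*(b*a*f))"
  proof -
    have "real ((2*n + 1) choose n) = fact (2*m+3) / (fact (m+1) * fact (m+2))"
      unfolding m by (subst binomial_fact) (auto simp: numeral_3_eq_3)
    also have "(fact (2*m+3) :: real) = c*(2*a)*F" unfolding F_def a_def c_def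
      by (simp add: numeral_eq_Suc algebra_simps)
    also have "(fact (m+1) :: real) = a*f" unfolding a_def f_def by (simp add: algebra_simps)
    finally show ?thesis unfolding e3 .
  qed
  have hf: "fact (n-1) = f" unfolding m f_def by simp
  have h16: "(16::real)^n = 16*(Q*Q)" unfolding m Q_def by (simp flip: power_mult_distrib)
  have hd: "2*real n + 2 = 2*b" "2*real n + 1 = c" unfolding m b_def c_def by simp_all
  have hn: "real n = a" unfolding m a_def by simp
  have hpi: "pi = S*S" unfolding S_def by simp
  show ?thesis
    unfolding hG hb1 hb2 hf h16 hd
    unfolding hn S_def[symmetric]
    unfolding hpi
    by (rule alg[OF pos])
qed


theorem mainTheorem11:
  fixes n :: nat
  assumes "n \<ge> 1"
  shows "((\<lambda>\<omega>::real. \<omega> ^ 3 * (cmod (ghat n \<omega>))\<^sup>2) has_integral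
           (2 * pi\<^sup>2 * (real n)\<^sup>2 / 16 ^ n * real ((2*n - 1) choose n) * real ((2*n + 1) choose n)))
         {0..}"
proof -
  have n: "n \<ge> 1" by fact
  define K where "K = 8 * (sqrt pi / fact (n-1))\<^sup>2 * (Gamma (real n + 3/2))\<^sup>2 / ((2*real n + 2) * (2*real n + 1))"
  define H where "H w = (\<integral>u. Pk n w u \<partial>lborel)" for w
  have gh: "\<omega> ^ 3 * (cmod (ghat n \<omega>))\<^sup>2 = \<omega> ^ 3 * (H \<omega>)\<^sup>2" for \<omega>
    by (simp add: ghat_eq[OF n] H_def)
  have Hm[measurable]: "H \<in> borel_measurable lborel" unfolding H_def by measurable
  have Knn: "K \<ge> 0" unfolding K_def by simp
  have hb: "has_bochner_integral lborel (\<lambda>w. w^3 * (H w)\<^sup>2 * indicator {0..} w) K"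
  proof (rule has_bochner_integral_nn_integral)
    show "(\<lambda>w. w^3 * (H w)\<^sup>2 * indicator {0..} w) \<in> borel_measurable lborel" by measurable
    show "AE x in lborel. 0 \<le> x^3 * (H x)\<^sup>2 * indicator {0..} x"
      by (rule AE_I2) (auto simp: indicator_def)
    show "0 \<le> K" by (rule Knn)
    show "(\<integral>\<^sup>+w. ennreal (w^3 * (H w)\<^sup>2 * indicator {0..} w) \<partial>lborel) = ennreal K"
      unfolding H_def K_def by (rule main_nn[OF n])
  qed
  then have "((\<lambda>w. w^3 * (H w)\<^sup>2 * indicator {0..} w) has_integral K) UNIV"
    using has_integral_integral_lborel[of "\<lambda>w. w^3 * (H w)\<^sup>2 * indicator {0..} w"]
    by (simp add: has_bochner_integral_iff)
  also have "(\<lambda>w. w^3 * (H w)\<^sup>2 * indicator {0..} w) = (\<lambda>w. if w \<in> {0..} then w ^ 3 * (cmod (ghat n w))\<^sup>2 else 0)"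
    by (auto simp: gh indicator_def)
  finally have "((\<lambda>w. w ^ 3 * (cmod (ghat n w))\<^sup>2) has_integral K) {0..}"
    by (simp only: has_integral_restrict_UNIV)
  then show ?thesis unfolding K_def final_alg[OF n] .
qed

end
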